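(* Let $F$ be a field, $G$ a finite group, $V$ a finite-dimensional $FG$-module, $R:=S[V]^G$, and let $\mathcal F=\{f_1,\dots,f_n\}\subseteq R$ be a homogeneous system of parameters of $R$. Let $H\le G$ be a subgroup with $\mathrm{char}(F)\nmid[G\colon H]$ and put $S:=S[V]^H$. Let $\pi\colon R\to S/(\sum_{i=1}^n f_iS)$ be the composition of the inclusion $R\subseteq S$ with the natural projection. Then $\ker(\pi)=F[\mathcal F]_+R$, where $F[\mathcal F]_+$ is the ideal of the polynomial algebra $F[\mathcal F]$ generated by $f_1,\dots,f_n$. Consequently $\pi$ induces an injective map $R/F[\mathcal F]_+R\to S/(\sum_i f_iS)$; so if moreover $R$ is Cohen–Macaulay and $\mathcal G\subseteq R$ is a set of homogeneous elements whose cardinality and multiset of degrees agree with those of a minimal homogeneous generating set of the $F[\mathcal F]$-module $R$, then $\mathcal G$ generates $R$ as an $F[\mathcal F]$-module if and only if $\pi(\mathcal G)$ is $F$-linearly independent in $S/(\sum_i f_iS)$.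
   Context: $S[V]$ denotes the symmetric algebra over $V$ with induced $G$-action; $S[V]^G$, $S[V]^H$ the invariant subrings. A homogeneous system of parameters of $R$ is a set of $\dim R$ homogeneous elements of positive degree, algebraically independent, over whose generated polynomial subalgebra $R$ is a finitely generated module. $R$ is Cohen–Macaulay if it is a free module over this subalgebra. *)

theory Defs
  imports "HOL-Library.Poly_Mapping" "HOL-Library.Multiset" "HOL-Library.Extended_Nat"
          "HOL-Algebra.Coset"
begin

text \<open>S[V] for dim V = d is the set of polynomials in the
  variables x_0,...,x_(d-1), the x_i being a basis of V.\<close>

type_synonym 'k mpoly = "(nat \<Rightarrow>\<^sub>0 nat) \<Rightarrow>\<^sub>0 'k"

definition mconst :: "'k::comm_ring_1 \<Rightarrow> 'k mpoly" where
  "mconst c = Poly_Mapping.single 0 c"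

definition mvar :: "nat \<Rightarrow> 'k::comm_ring_1 mpoly" where
  "mvar i = Poly_Mapping.single (Poly_Mapping.single i 1) 1"

definition polyring :: "nat \<Rightarrow> 'k::comm_ring_1 mpoly set" where
  "polyring d = {p. \<forall>m \<in> Poly_Mapping.keys p. Poly_Mapping.keys m \<subseteq> {..<d}}"

definition subst :: "(nat \<Rightarrow> 'k::comm_ring_1 mpoly) \<Rightarrow> 'k mpoly \<Rightarrow> 'k mpoly" where
  "subst \<sigma> p = (\<Sum>m\<in>Poly_Mapping.keys p. mconst (Poly_Mapping.lookup p m) * (\<Prod>i\<in>Poly_Mapping.keys m. \<sigma> i ^ Poly_Mapping.lookup m i))"

text \<open>Action of a d x d matrix A (acting on V by A e_j = sum_i A i j e_i)
  on S[V], extended as an algebra automorphism.\<close>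
definition act :: "nat \<Rightarrow> (nat \<Rightarrow> nat \<Rightarrow> 'k::comm_ring_1) \<Rightarrow> 'k mpoly \<Rightarrow> 'k mpoly" where
  "act d A p = subst (\<lambda>j. \<Sum>i<d. mconst (A i j) * mvar i) p"

definition invariants :: "nat \<Rightarrow> ('g \<Rightarrow> nat \<Rightarrow> nat \<Rightarrow> 'k::comm_ring_1) \<Rightarrow> 'g set \<Rightarrow> 'k mpoly set" where
  "invariants d rho K = {p \<in> polyring d. \<forall>g\<in>K. act d (rho g) p = p}"

definition is_rep :: "('g, 'b) monoid_scheme \<Rightarrow> nat \<Rightarrow> ('g \<Rightarrow> nat \<Rightarrow> nat \<Rightarrow> 'k::comm_ring_1) \<Rightarrow> bool" where
  "is_rep G d rho \<longleftrightarrow>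
     (\<forall>g\<in>carrier G. \<forall>h\<in>carrier G. \<forall>i<d. \<forall>j<d.
        rho (g \<otimes>\<^bsub>G\<^esub> h) i j = (\<Sum>l<d. rho g i l * rho h l j)) \<and>
     (\<forall>i<d. \<forall>j<d. rho \<one>\<^bsub>G\<^esub> i j = (if i = j then 1 else 0))"

definition mdeg :: "(nat \<Rightarrow>\<^sub>0 nat) \<Rightarrow> nat" where
  "mdeg m = (\<Sum>i\<in>Poly_Mapping.keys m. Poly_Mapping.lookup m i)"

definition homog_of_deg :: "'k::comm_ring_1 mpoly \<Rightarrow> nat \<Rightarrow> bool" where
  "homog_of_deg p e \<longleftrightarrow> (\<forall>m\<in>Poly_Mapping.keys p. mdeg m = e)"

definition is_homog :: "'k::comm_ring_1 mpoly \<Rightarrow> bool" where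
  "is_homog p \<longleftrightarrow> (\<exists>e. homog_of_deg p e)"

definition hdeg :: "'k::comm_ring_1 mpoly \<Rightarrow> nat" where
  "hdeg p = (if p = 0 then 0 else mdeg (SOME m. m \<in> Poly_Mapping.keys p))"

definition alg_closure :: "(nat \<Rightarrow> 'k::comm_ring_1 mpoly) \<Rightarrow> nat \<Rightarrow> 'k mpoly set" where
  "alg_closure f n = {subst f q | q. q \<in> polyring n}"

definition alg_indep :: "(nat \<Rightarrow> 'k::comm_ring_1 mpoly) \<Rightarrow> nat \<Rightarrow> bool" where
  "alg_indep f n \<longleftrightarrow> (\<forall>q\<in>polyring n. subst f q = 0 \<longrightarrow> q = 0)"

definition lin_span :: "'a::comm_ring_1 set \<Rightarrow> 'a set \<Rightarrow> 'a set" where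
  "lin_span A X = {(\<Sum>j<(k::nat). a j * x j) | k a x. \<forall>j<k. a j \<in> A \<and> x j \<in> X}"

definition fin_gen_module :: "'a::comm_ring_1 set \<Rightarrow> 'a set \<Rightarrow> bool" where
  "fin_gen_module A M \<longleftrightarrow> (\<exists>B. finite B \<and> B \<subseteq> M \<and> M = lin_span A B)"

definition free_module :: "'a::comm_ring_1 set \<Rightarrow> 'a set \<Rightarrow> bool" where
  "free_module A M \<longleftrightarrow> (\<exists>B. B \<subseteq> M \<and> M = lin_span A B \<and>
      (\<forall>B' c. finite B' \<and> B' \<subseteq> B \<and> (\<forall>b\<in>B'. c b \<in> A) \<and> (\<Sum>b\<in>B'. c b * b) = 0
              \<longrightarrow> (\<forall>b\<in>B'. c b = 0)))"

definition prime_ideal_in :: "'a::comm_ring_1 set \<Rightarrow> 'a set \<Rightarrow> bool" where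
  "prime_ideal_in R P \<longleftrightarrow> P \<subseteq> R \<and> P \<noteq> R \<and> 0 \<in> P \<and>
     (\<forall>a\<in>P. \<forall>b\<in>P. a + b \<in> P) \<and> (\<forall>r\<in>R. \<forall>a\<in>P. r * a \<in> P) \<and>
     (\<forall>a\<in>R. \<forall>b\<in>R. a * b \<in> P \<longrightarrow> a \<in> P \<or> b \<in> P)"

definition krull_dim :: "'a::comm_ring_1 set \<Rightarrow> enat" where
  "krull_dim R = Sup {enat k | k. \<exists>c :: nat \<Rightarrow> 'a set.
      (\<forall>i\<le>k. prime_ideal_in R (c i)) \<and> (\<forall>i<k. c i \<subset> c (Suc i))}"

definition hsop :: "'k::field mpoly set \<Rightarrow> (nat \<Rightarrow> 'k mpoly) \<Rightarrow> nat \<Rightarrow> bool" where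
  "hsop R f n \<longleftrightarrow> enat n = krull_dim R \<and>
     (\<forall>i<n. f i \<in> R \<and> (\<exists>e>0. homog_of_deg (f i) e)) \<and>
     alg_indep f n \<and> fin_gen_module (alg_closure f n) R"

definition plus_ideal :: "(nat \<Rightarrow> 'k::comm_ring_1 mpoly) \<Rightarrow> nat \<Rightarrow> 'k mpoly set" where
  "plus_ideal f n = {(\<Sum>i<n. f i * a i) | a. \<forall>i<n. a i \<in> alg_closure f n}"

definition gen_ideal :: "(nat \<Rightarrow> 'k::comm_ring_1 mpoly) \<Rightarrow> nat \<Rightarrow> 'k mpoly set \<Rightarrow> 'k mpoly set" where
  "gen_ideal f n S = {(\<Sum>i<n. f i * s i) | s. \<forall>i<n. s i \<in> S}"

definition min_hom_gen_set :: "'k::comm_ring_1 mpoly set \<Rightarrow> 'k mpoly set \<Rightarrow> 'k mpoly set \<Rightarrow> bool" where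
  "min_hom_gen_set A M X \<longleftrightarrow> X \<subseteq> M \<and> (\<forall>x\<in>X. is_homog x) \<and> M = lin_span A X \<and>
     (\<forall>Y. Y \<subset> X \<longrightarrow> M \<noteq> lin_span A Y)"

end

theory Submission
  imports Defs
begin


section \<open>Substitution is a ring homomorphism\<close>

definition mon :: "(nat \<Rightarrow> 'k::comm_ring_1 mpoly) \<Rightarrow> (nat \<Rightarrow>\<^sub>0 nat) \<Rightarrow> 'k mpoly" where
  "mon \<sigma> m = (\<Prod>i\<in>Poly_Mapping.keys m. \<sigma> i ^ Poly_Mapping.lookup m i)"

lemma mon_superset:
  assumes "finite K" "Poly_Mapping.keys m \<subseteq> K"
  shows "mon \<sigma> m = (\<Prod>i\<in>K. \<sigma> i ^ Poly_Mapping.lookup m i)"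
  unfolding mon_def using assms
  by (intro prod.mono_neutral_left) (auto simp: in_keys_iff)

lemma mon_add: "mon \<sigma> (m1 + m2) = mon \<sigma> m1 * mon \<sigma> m2"
proof -
  let ?K = "Poly_Mapping.keys m1 \<union> Poly_Mapping.keys m2"
  have "mon \<sigma> (m1 + m2) = (\<Prod>i\<in>?K. \<sigma> i ^ Poly_Mapping.lookup (m1 + m2) i)"
    by (rule mon_superset) (auto simp: keys_add dest: subsetD[OF keys_add])
  also have "\<dots> = (\<Prod>i\<in>?K. \<sigma> i ^ Poly_Mapping.lookup m1 i * \<sigma> i ^ Poly_Mapping.lookup m2 i)"
    by (simp add: lookup_add power_add)
  also have "\<dots> = mon \<sigma> m1 * mon \<sigma> m2"
    by (simp add: prod.distrib mon_superset[of ?K])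
  finally show ?thesis .
qed

lemma mon_zero [simp]: "mon \<sigma> 0 = 1"
  by (simp add: mon_def)

lemma mconst_0 [simp]: "mconst 0 = 0"
  by (simp add: mconst_def)

lemma mconst_1 [simp]: "mconst 1 = 1"
  by (simp add: mconst_def)

lemma mconst_add: "mconst (a + b) = mconst a + mconst b"
  by (simp add: mconst_def single_add)

lemma mconst_mult: "mconst (a * b) = mconst a * mconst b"
  by (simp add: mconst_def mult_single)

lemma mconst_uminus: "mconst (- a) = - mconst a"
  by (simp add: mconst_def single_uminus)

lemma mconst_diff: "mconst (a - b) = mconst a - mconst b"
  by (simp add: mconst_def single_diff)

lemma mconst_sum: "mconst (sum g A) = (\<Sum>x\<in>A. mconst (g x))"
  by (induction A rule: infinite_finite_induct) (auto simp: mconst_add)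

lemma subst_superset:
  assumes "finite K" "Poly_Mapping.keys p \<subseteq> K"
  shows "subst \<sigma> p = (\<Sum>m\<in>K. mconst (Poly_Mapping.lookup p m) * mon \<sigma> m)"
  unfolding subst_def mon_def[symmetric] using assms
  by (intro sum.mono_neutral_left) (auto simp: in_keys_iff)

lemma subst_0 [simp]: "subst \<sigma> 0 = 0"
  by (simp add: subst_def)

lemma subst_add: "subst \<sigma> (p + q) = subst \<sigma> p + subst \<sigma> q"
proof -
  let ?K = "Poly_Mapping.keys p \<union> Poly_Mapping.keys q"
  have "subst \<sigma> (p + q) = (\<Sum>m\<in>?K. mconst (Poly_Mapping.lookup (p + q) m) * mon \<sigma> m)"
    by (rule subst_superset) (auto dest: subsetD[OF keys_add])
  also have "\<dots> = (\<Sum>m\<in>?K. mconst (Poly_Mapping.lookup p m) * mon \<sigma> m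
                    + mconst (Poly_Mapping.lookup q m) * mon \<sigma> m)"
    by (simp add: lookup_add mconst_add algebra_simps)
  also have "\<dots> = subst \<sigma> p + subst \<sigma> q"
    by (simp add: sum.distrib subst_superset[of ?K])
  finally show ?thesis .
qed

lemma subst_sum: "subst \<sigma> (sum g A) = (\<Sum>x\<in>A. subst \<sigma> (g x))"
  by (induction A rule: infinite_finite_induct) (auto simp: subst_add)

lemma subst_single: "subst \<sigma> (Poly_Mapping.single m c) = mconst c * mon \<sigma> m"
  by (subst subst_superset[of "{m}"]) auto

lemma pm_decomp: "p = (\<Sum>m\<in>Poly_Mapping.keys p. Poly_Mapping.single m (Poly_Mapping.lookup p m))"
  by (rule poly_mapping_eqI) (auto simp: lookup_sum lookup_single when_def in_keys_iff
      sum.delta' split: if_splits)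

lemma subst_mult: "subst \<sigma> (p * q) = subst \<sigma> p * subst \<sigma> q"
proof -
  let ?P = "Poly_Mapping.keys p" and ?Q = "Poly_Mapping.keys q"
  let ?lp = "Poly_Mapping.lookup p" and ?lq = "Poly_Mapping.lookup q"
  have "p * q = (\<Sum>m\<in>?P. Poly_Mapping.single m (?lp m)) * (\<Sum>m'\<in>?Q. Poly_Mapping.single m' (?lq m'))"
    by (subst pm_decomp[of p], subst pm_decomp[of q]) (rule refl)
  also have "\<dots> = (\<Sum>m\<in>?P. \<Sum>m'\<in>?Q. Poly_Mapping.single (m + m') (?lp m * ?lq m'))"
    by (simp add: sum_product mult_single)
  finally have "subst \<sigma> (p * q) = (\<Sum>m\<in>?P. \<Sum>m'\<in>?Q. mconst (?lp m) * mon \<sigma> m * (mconst (?lq m') * mon \<sigma> m'))"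
    by (simp add: subst_sum subst_single mon_add mconst_mult algebra_simps)
  also have "\<dots> = subst \<sigma> p * subst \<sigma> q"
    by (simp add: subst_def mon_def sum_product)
  finally show ?thesis .
qed

lemma subst_mconst [simp]: "subst \<sigma> (mconst c) = mconst c"
  by (simp add: mconst_def subst_single)

lemma subst_1 [simp]: "subst \<sigma> 1 = 1"
  using subst_mconst[of \<sigma> 1] by simp

lemma subst_mvar [simp]: "subst \<sigma> (mvar i) = \<sigma> i"
  by (simp add: mvar_def subst_single mon_def)

lemma subst_uminus: "subst \<sigma> (- p) = - subst \<sigma> p"
proof -
  have "subst \<sigma> p + subst \<sigma> (- p) = 0" using subst_add[of \<sigma> p "- p"] by simp
  then show ?thesis by (simp add: add_eq_0_iff)
qed

lemma subst_diff: "subst \<sigma> (p - q) = subst \<sigma> p - subst \<sigma> q"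
  using subst_add[of \<sigma> p "- q"] by (simp add: subst_uminus)

lemma subst_power: "subst \<sigma> (p ^ k) = subst \<sigma> p ^ k"
  by (induction k) (auto simp: subst_mult)

lemma subst_prod: "subst \<sigma> (prod g A) = (\<Prod>x\<in>A. subst \<sigma> (g x))"
  by (induction A rule: infinite_finite_induct) (auto simp: subst_mult)

lemma subst_subst: "subst \<tau> (subst \<sigma> p) = subst (\<lambda>i. subst \<tau> (\<sigma> i)) p"
proof -
  have "subst \<tau> (subst \<sigma> p) = subst \<tau> (\<Sum>m\<in>Poly_Mapping.keys p. mconst (Poly_Mapping.lookup p m) * (\<Prod>i\<in>Poly_Mapping.keys m. \<sigma> i ^ Poly_Mapping.lookup m i))"
    by (simp only: subst_def[of \<sigma> p])
  also have "\<dots> = (\<Sum>m\<in>Poly_Mapping.keys p. mconst (Poly_Mapping.lookup p m) * (\<Prod>i\<in>Poly_Mapping.keys m. subst \<tau> (\<sigma> i) ^ Poly_Mapping.lookup m i))"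
    by (simp add: subst_sum subst_mult subst_prod subst_power)
  also have "\<dots> = subst (\<lambda>i. subst \<tau> (\<sigma> i)) p"
    by (simp only: subst_def[of "\<lambda>i. subst \<tau> (\<sigma> i)" p])
  finally show ?thesis .
qed

lemma subst_cong:
  assumes "\<And>m i. m \<in> Poly_Mapping.keys p \<Longrightarrow> i \<in> Poly_Mapping.keys m \<Longrightarrow> \<sigma> i = \<tau> i"
  shows "subst \<sigma> p = subst \<tau> p"
  unfolding subst_def using assms by (intro sum.cong refl arg_cong2[where f="(*)"] prod.cong) auto

lemma lookup_mconst_mult: "Poly_Mapping.lookup (mconst c * p) m = c * Poly_Mapping.lookup p m"
  by (simp add: mconst_def mult_map_scale_conv_mult[symmetric] Poly_Mapping.map.rep_eq when_def)

lemma keys_mconst_mult: "Poly_Mapping.keys (mconst c * p) \<subseteq> Poly_Mapping.keys p"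
  by (auto simp: in_keys_iff lookup_mconst_mult)



section \<open>Subalgebras\<close>

definition subalg :: "'k::comm_ring_1 mpoly set \<Rightarrow> bool" where
  "subalg T \<longleftrightarrow> (\<forall>c. mconst c \<in> T) \<and> (\<forall>p\<in>T. \<forall>q\<in>T. p + q \<in> T \<and> p * q \<in> T)"

lemma subalg_mconst: "subalg T \<Longrightarrow> mconst c \<in> T"
  by (simp add: subalg_def)
lemma subalg_0: "subalg T \<Longrightarrow> 0 \<in> T"
  using subalg_mconst[of T 0] by simp
lemma subalg_1: "subalg T \<Longrightarrow> 1 \<in> T"
  using subalg_mconst[of T 1] by simp
lemma subalg_add: "subalg T \<Longrightarrow> p \<in> T \<Longrightarrow> q \<in> T \<Longrightarrow> p + q \<in> T"
  by (simp add: subalg_def)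
lemma subalg_mult: "subalg T \<Longrightarrow> p \<in> T \<Longrightarrow> q \<in> T \<Longrightarrow> p * q \<in> T"
  by (simp add: subalg_def)
lemma subalg_uminus: "subalg T \<Longrightarrow> p \<in> T \<Longrightarrow> - p \<in> T"
  using subalg_mult[of T "mconst (-1)" p] subalg_mconst[of T "-1"]
  by (simp add: mconst_uminus)
lemma subalg_diff: "subalg T \<Longrightarrow> p \<in> T \<Longrightarrow> q \<in> T \<Longrightarrow> p - q \<in> T"
  using subalg_add[of T p "- q"] subalg_uminus[of T q] by simp
lemma subalg_sum: "subalg T \<Longrightarrow> (\<And>x. x \<in> B \<Longrightarrow> g x \<in> T) \<Longrightarrow> sum g B \<in> T"
  by (induction B rule: infinite_finite_induct) (auto simp: subalg_0 subalg_add)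
lemma subalg_prod: "subalg T \<Longrightarrow> (\<And>x. x \<in> B \<Longrightarrow> g x \<in> T) \<Longrightarrow> prod g B \<in> T"
  by (induction B rule: infinite_finite_induct) (auto simp: subalg_1 subalg_mult)
lemma subalg_power: "subalg T \<Longrightarrow> p \<in> T \<Longrightarrow> p ^ k \<in> T"
  by (induction k) (auto simp: subalg_1 subalg_mult)

lemma subalg_subst:
  assumes "subalg T" "\<And>m i. m \<in> Poly_Mapping.keys p \<Longrightarrow> i \<in> Poly_Mapping.keys m \<Longrightarrow> \<sigma> i \<in> T"
  shows "subst \<sigma> p \<in> T"
  unfolding subst_def using assms
  by (intro subalg_sum subalg_mult subalg_mconst subalg_prod subalg_power) auto

lemma keys_add_nat: "Poly_Mapping.keys ((a::nat \<Rightarrow>\<^sub>0 nat) + b) = Poly_Mapping.keys a \<union> Poly_Mapping.keys b"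
  by (auto simp: in_keys_iff lookup_add)

lemma subalg_polyring: "subalg (polyring d)"
  unfolding subalg_def polyring_def
proof (intro conjI allI ballI)
  fix c :: 'a show "mconst c \<in> {p. \<forall>m\<in>Poly_Mapping.keys p. Poly_Mapping.keys m \<subseteq> {..<d}}"
    by (simp add: mconst_def)
next
  fix p q :: "'a mpoly"
  assume p: "p \<in> {p. \<forall>m\<in>Poly_Mapping.keys p. Poly_Mapping.keys m \<subseteq> {..<d}}"
     and q: "q \<in> {p. \<forall>m\<in>Poly_Mapping.keys p. Poly_Mapping.keys m \<subseteq> {..<d}}"
  show "p + q \<in> {p. \<forall>m\<in>Poly_Mapping.keys p. Poly_Mapping.keys m \<subseteq> {..<d}}"
    using p q by (auto dest!: subsetD[OF keys_add])
  have "\<forall>m\<in>Poly_Mapping.keys (p * q). Poly_Mapping.keys m \<subseteq> {..<d}"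
  proof
    fix m assume "m \<in> Poly_Mapping.keys (p * q)"
    then obtain a b where "m = a + b" "a \<in> Poly_Mapping.keys p" "b \<in> Poly_Mapping.keys q"
      using keys_mult by blast
    then show "Poly_Mapping.keys m \<subseteq> {..<d}" using p q by (auto simp: keys_add_nat)
  qed
  then show "p * q \<in> {p. \<forall>m\<in>Poly_Mapping.keys p. Poly_Mapping.keys m \<subseteq> {..<d}}" by simp
qed

lemma mvar_polyring: "i < d \<Longrightarrow> mvar i \<in> polyring d"
  by (simp add: mvar_def polyring_def)

lemma polyring_var: "p \<in> polyring d \<Longrightarrow> m \<in> Poly_Mapping.keys p \<Longrightarrow> i \<in> Poly_Mapping.keys m \<Longrightarrow> i < d"
  by (auto simp: polyring_def)

section \<open>The action\<close>

definition lin :: "nat \<Rightarrow> (nat \<Rightarrow> nat \<Rightarrow> 'k::comm_ring_1) \<Rightarrow> nat \<Rightarrow> 'k mpoly" where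
  "lin d A j = (\<Sum>i<d. mconst (A i j) * mvar i)"

lemma act_lin: "act d A p = subst (lin d A) p"
  by (simp add: act_def lin_def[abs_def])

lemma lin_polyring: "lin d A j \<in> polyring d"
  unfolding lin_def
  by (intro subalg_sum subalg_mult subalg_mconst subalg_polyring mvar_polyring) auto

lemma act_polyring: "act d A p \<in> polyring d"
  unfolding act_lin by (intro subalg_subst subalg_polyring lin_polyring)

lemma act_add: "act d A (p + q) = act d A p + act d A q"
  by (simp add: act_lin subst_add)
lemma act_mult: "act d A (p * q) = act d A p * act d A q"
  by (simp add: act_lin subst_mult)
lemma act_sum: "act d A (sum g B) = (\<Sum>x\<in>B. act d A (g x))"
  by (simp add: act_lin subst_sum)
lemma act_mconst [simp]: "act d A (mconst c) = mconst c"
  by (simp add: act_lin)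
lemma act_0 [simp]: "act d A 0 = 0"
  by (simp add: act_lin)
lemma act_diff: "act d A (p - q) = act d A p - act d A q"
  by (simp add: act_lin subst_diff)

lemma act_cong:
  assumes "p \<in> polyring d" "\<And>i j. i < d \<Longrightarrow> j < d \<Longrightarrow> A i j = B i j"
  shows "act d A p = act d B p"
  unfolding act_lin
proof (rule subst_cong)
  fix m j assume "m \<in> Poly_Mapping.keys p" "j \<in> Poly_Mapping.keys m"
  then have "j < d" using assms(1) polyring_var by blast
  then show "lin d A j = lin d B j"
    unfolding lin_def by (intro sum.cong refl) (simp add: assms(2))
qed

lemma act_comp:
  assumes "p \<in> polyring d"
  shows "act d A (act d B p) = act d (\<lambda>i j. \<Sum>l<d. A i l * B l j) p"
proof -
  have "act d A (act d B p) = subst (\<lambda>j. subst (lin d A) (lin d B j)) p"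
    by (simp add: act_lin subst_subst)
  also have "\<dots> = subst (lin d (\<lambda>i j. \<Sum>l<d. A i l * B l j)) p"
  proof (rule subst_cong)
    fix j
    have "subst (lin d A) (lin d B j) = (\<Sum>l<d. mconst (B l j) * (\<Sum>i<d. mconst (A i l) * mvar i))"
      by (simp add: lin_def subst_sum subst_mult)
    also have "\<dots> = (\<Sum>l<d. \<Sum>i<d. mconst (A i l * B l j) * mvar i)"
      by (simp add: sum_distrib_left mconst_mult algebra_simps)
    also have "\<dots> = (\<Sum>i<d. \<Sum>l<d. mconst (A i l * B l j) * mvar i)"
      by (rule sum.swap)
    also have "\<dots> = lin d (\<lambda>i j. \<Sum>l<d. A i l * B l j) j"
      by (simp add: lin_def mconst_sum sum_distrib_right)
    finally show "subst (lin d A) (lin d B j) = lin d (\<lambda>i j. \<Sum>l<d. A i l * B l j) j" .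
  qed
  finally show ?thesis by (simp add: act_lin)
qed

lemma mvar_power: "mvar i ^ k = Poly_Mapping.single (Poly_Mapping.single i k) 1"
  by (induction k) (auto simp: mvar_def mult_single single_add[symmetric])

lemma prod_single_mon:
  "(\<Prod>i\<in>K. Poly_Mapping.single (Poly_Mapping.single i (g i)) (1::'k::comm_ring_1))
     = Poly_Mapping.single (\<Sum>i\<in>K. Poly_Mapping.single i (g i)) 1"
  by (induction K rule: infinite_finite_induct) (auto simp: mult_single)

lemma subst_mvar_id: "subst mvar p = p"
proof -
  have "subst mvar (Poly_Mapping.single m c) = Poly_Mapping.single m c" for m and c :: 'a
  proof -
    have "subst mvar (Poly_Mapping.single m c) = mconst c * Poly_Mapping.single m 1"
      by (simp add: subst_single mon_def mvar_power prod_single_mon pm_decomp[of m, symmetric])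
    also have "\<dots> = Poly_Mapping.single m c" by (simp add: mconst_def mult_single)
    finally show ?thesis .
  qed
  then show ?thesis
    by (subst (1 2) pm_decomp[of p]) (simp add: subst_sum)
qed

lemma act_id:
  assumes "p \<in> polyring d" "\<And>i j. i < d \<Longrightarrow> j < d \<Longrightarrow> A i j = (if i = j then 1 else 0)"
  shows "act d A p = p"
proof -
  have "act d A p = subst mvar p"
    unfolding act_lin
  proof (rule subst_cong)
    fix m j assume "m \<in> Poly_Mapping.keys p" "j \<in> Poly_Mapping.keys m"
    then have "j < d" using assms(1) polyring_var by blast
    have "(\<Sum>i<d. mconst (A i j) * mvar i) = (\<Sum>i<d. if i = j then mvar i else 0)"
      by (rule sum.cong) (auto simp: assms(2) \<open>j < d\<close>)
    then show "lin d A j = mvar j"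
      by (simp add: lin_def \<open>j < d\<close>)
  qed
  then show ?thesis by (simp add: subst_mvar_id)
qed

lemma subalg_invariants: "subalg (invariants d rho K)"
  unfolding subalg_def invariants_def
  using subalg_polyring[of d]
  by (auto simp: subalg_mconst[OF subalg_polyring] subalg_add[OF subalg_polyring]
      subalg_mult[OF subalg_polyring] act_add act_mult)

lemma subalg_alg_closure: "subalg (alg_closure f n)"
  unfolding subalg_def alg_closure_def
proof (intro conjI allI ballI)
  fix c :: 'a
  show "mconst c \<in> {subst f q |q. q \<in> polyring n}"
    using subalg_mconst[OF subalg_polyring] by (metis (mono_tags, lifting) mem_Collect_eq subst_mconst)
next
  fix p q assume "p \<in> {subst f q |q. q \<in> polyring n}" "q \<in> {subst f q |q. q \<in> polyring n}"
  then obtain p' q' where "p = subst f p'" "q = subst f q'" and p'q': "p' \<in> polyring n" "q' \<in> polyring n" by auto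
  moreover have "p' + q' \<in> polyring n" "p' * q' \<in> polyring n"
    using subalg_add[OF subalg_polyring] subalg_mult[OF subalg_polyring] p'q' by auto
  ultimately show "p + q \<in> {subst f q |q. q \<in> polyring n}" "p * q \<in> {subst f q |q. q \<in> polyring n}"
    by (auto simp: subst_add[symmetric] subst_mult[symmetric])
qed

lemma alg_closure_subset:
  assumes "subalg T" "\<And>i. i < n \<Longrightarrow> f i \<in> T"
  shows "alg_closure f n \<subseteq> T"
  unfolding alg_closure_def
proof
  fix x assume "x \<in> {subst f q |q. q \<in> polyring n}"
  then obtain q where x: "x = subst f q" and q: "q \<in> polyring n" by blast
  show "x \<in> T" unfolding x
  proof (rule subalg_subst[OF assms(1)])
    fix m i assume "m \<in> Poly_Mapping.keys q" "i \<in> Poly_Mapping.keys m"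
    then have "i < n" using q polyring_var by blast
    then show "f i \<in> T" using assms(2) by blast
  qed
qed

lemma f_in_alg_closure: "i < n \<Longrightarrow> f i \<in> alg_closure f n"
  unfolding alg_closure_def
  by (auto intro!: exI[of _ "mvar i"] mvar_polyring)

section \<open>Linear spans in set form\<close>

definition ls :: "'a::comm_ring_1 set \<Rightarrow> 'a set \<Rightarrow> 'a set" where
  "ls A X = {(\<Sum>x\<in>T. a x * x) | T a. finite T \<and> T \<subseteq> X \<and> (\<forall>x\<in>T. a x \<in> A)}"

lemma ls_0: "0 \<in> ls A X"
  unfolding ls_def by (auto intro!: exI[of _ "{}"])

lemma ls_add:
  assumes A: "0 \<in> A" "\<And>a b. a \<in> A \<Longrightarrow> b \<in> A \<Longrightarrow> a + b \<in> A"
    and y: "y1 \<in> ls A X" "y2 \<in> ls A X"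
  shows "y1 + y2 \<in> ls A X"
proof -
  obtain T1 a1 where 1: "y1 = (\<Sum>x\<in>T1. a1 x * x)" "finite T1" "T1 \<subseteq> X" "\<forall>x\<in>T1. a1 x \<in> A"
    using y(1) unfolding ls_def by blast
  obtain T2 a2 where 2: "y2 = (\<Sum>x\<in>T2. a2 x * x)" "finite T2" "T2 \<subseteq> X" "\<forall>x\<in>T2. a2 x \<in> A"
    using y(2) unfolding ls_def by blast
  define a where "a x = (if x \<in> T1 then a1 x else 0) + (if x \<in> T2 then a2 x else 0)" for x
  have pt: "a x * x = (if x \<in> T1 then a1 x * x else 0) + (if x \<in> T2 then a2 x * x else 0)" for x
    by (simp add: a_def distrib_right)
  have "(\<Sum>x\<in>T1 \<union> T2. a x * x) = (\<Sum>x\<in>T1 \<union> T2. (if x \<in> T1 then a1 x * x else 0))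
        + (\<Sum>x\<in>T1 \<union> T2. (if x \<in> T2 then a2 x * x else 0))"
    by (simp only: pt sum.distrib)
  also have "\<dots> = y1 + y2"
    using 1 2 by (simp add: sum.If_cases Int_absorb1 Int_absorb2 Int_commute)
  finally have "y1 + y2 = (\<Sum>x\<in>T1 \<union> T2. a x * x)" by simp
  moreover have "\<forall>x\<in>T1 \<union> T2. a x \<in> A" using 1 2 A by (auto simp: a_def)
  ultimately show ?thesis using 1 2 unfolding ls_def
    by (intro CollectI exI[of _ "T1 \<union> T2"] exI[of _ a]) auto
qed

lemma ls_single: "a \<in> A \<Longrightarrow> x \<in> X \<Longrightarrow> a * x \<in> ls A X"
  unfolding ls_def by (auto intro!: exI[of _ "{x}"] exI[of _ "\<lambda>_. a"])

lemma ls_sum: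
  assumes A: "0 \<in> A" "\<And>a b. a \<in> A \<Longrightarrow> b \<in> A \<Longrightarrow> a + b \<in> A"
  shows "(\<And>i. i \<in> B \<Longrightarrow> g i \<in> ls A X) \<Longrightarrow> sum g B \<in> ls A X"
  by (induction B rule: infinite_finite_induct) (auto simp: ls_0 ls_add[OF A])

lemma ls_multA:
  assumes "\<And>a b. a \<in> A \<Longrightarrow> b \<in> A \<Longrightarrow> a * b \<in> A" "b \<in> A" "y \<in> ls A X"
  shows "b * y \<in> ls A X"
proof -
  obtain T a where 1: "y = (\<Sum>x\<in>T. a x * x)" "finite T" "T \<subseteq> X" "\<forall>x\<in>T. a x \<in> A"
    using assms(3) unfolding ls_def by blast
  have "b * y = (\<Sum>x\<in>T. (b * a x) * x)" by (simp add: 1 sum_distrib_left algebra_simps)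
  moreover have "\<forall>x\<in>T. b * a x \<in> A" using 1 assms by blast
  ultimately show ?thesis using 1 unfolding ls_def
    by (intro CollectI exI[of _ T] exI[of _ "\<lambda>x. b * a x"]) auto
qed

lemma ls_mono: "X \<subseteq> Y \<Longrightarrow> ls A X \<subseteq> ls A Y"
  unfolding ls_def by blast

lemma lin_span_ls:
  assumes A: "0 \<in> A" "\<And>a b. a \<in> A \<Longrightarrow> b \<in> A \<Longrightarrow> a + b \<in> A"
  shows "lin_span A X = ls A X"
proof
  show "lin_span A X \<subseteq> ls A X"
  proof
    fix y assume "y \<in> lin_span A X"
    then obtain k a x where y: "y = (\<Sum>j<(k::nat). a j * x j)" "\<forall>j<k. a j \<in> A \<and> x j \<in> X"
      unfolding lin_span_def by blast
    show "y \<in> ls A X" unfolding y(1)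
      by (rule ls_sum[OF A]) (use y(2) in \<open>auto intro: ls_single\<close>)
  qed
next
  show "ls A X \<subseteq> lin_span A X"
  proof
    fix y assume "y \<in> ls A X"
    then obtain T a where 1: "y = (\<Sum>x\<in>T. a x * x)" "finite T" "T \<subseteq> X" "\<forall>x\<in>T. a x \<in> A"
      unfolding ls_def by blast
    obtain h where h: "bij_betw h {0..<card T} T"
      using ex_bij_betw_nat_finite[OF 1(2)] by blast
    have "y = (\<Sum>j\<in>{0..<card T}. a (h j) * h j)"
      unfolding 1(1) by (rule sum.reindex_bij_betw[OF h, symmetric])
    moreover have "\<forall>j<card T. a (h j) \<in> A \<and> h j \<in> X"
      using h 1 bij_betwE by fastforce
    ultimately have "y = (\<Sum>j<card T. (\<lambda>j. a (h j)) j * h j) \<and> (\<forall>j<card T. (\<lambda>j. a (h j)) j \<in> A \<and> h j \<in> X)"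
      unfolding atLeast0LessThan by simp
    then have "\<exists>(k::nat) a' x. y = (\<Sum>j<k. a' j * x j) \<and> (\<forall>j<k. a' j \<in> A \<and> x j \<in> X)"
      by fast
    then show "y \<in> lin_span A X" unfolding lin_span_def by blast
  qed
qed

lemma ls_subset_subalg:
  assumes "subalg T" "A \<subseteq> T" "X \<subseteq> T"
  shows "ls A X \<subseteq> T"
  unfolding ls_def using assms
  by (auto intro!: subalg_sum subalg_mult)



locale inv_setup =
  fixes G :: "('g, 'b) monoid_scheme" (structure) and H :: "'g set"
    and d :: nat and rho :: "'g \<Rightarrow> nat \<Rightarrow> nat \<Rightarrow> 'k::field"
    and f :: "nat \<Rightarrow> 'k mpoly" and n :: nat
  assumes grp: "group G" and finG: "finite (carrier G)" and rep: "is_rep G d rho"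
    and hs: "hsop (invariants d rho (carrier G)) f n"
    and sub: "subgroup H G"
    and chr: "\<not> CHAR('k) dvd card (rcosets\<^bsub>G\<^esub> H)"
begin

abbreviation "R \<equiv> invariants d rho (carrier G)"
abbreviation "S \<equiv> invariants d rho H"
abbreviation "A \<equiv> alg_closure f n"
abbreviation "I \<equiv> lin_span (plus_ideal f n) R"

definition J :: "'k mpoly set" where
  "J = {(\<Sum>i<n. f i * y i) | y. \<forall>i<n. y i \<in> R}"

lemma subalgR: "subalg R" by (rule subalg_invariants)
lemma subalgA: "subalg A" by (rule subalg_alg_closure)

lemma f_R: "i < n \<Longrightarrow> f i \<in> R"
  using hs by (auto simp: hsop_def)

lemma A_R: "A \<subseteq> R"
  by (rule alg_closure_subset[OF subalgR f_R])

lemma R_poly: "r \<in> R \<Longrightarrow> r \<in> polyring d"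
  by (simp add: invariants_def)

lemma R_inv: "r \<in> R \<Longrightarrow> g \<in> carrier G \<Longrightarrow> act d (rho g) r = r"
  by (simp add: invariants_def)

lemma S_inv: "s \<in> S \<Longrightarrow> h \<in> H \<Longrightarrow> act d (rho h) s = s"
  by (simp add: invariants_def)

lemma H_G: "H \<subseteq> carrier G"
  using sub by (rule subgroup.subset)

lemma rcosetsE: "C \<in> rcosets H \<Longrightarrow> \<exists>a\<in>carrier G. C = H #> a"
  by (simp add: RCOSETS_def)

lemma R_S: "R \<subseteq> S"
  using H_G by (auto simp: invariants_def)

lemma act_mul:
  assumes "g \<in> carrier G" "h \<in> carrier G" "p \<in> polyring d"
  shows "act d (rho (g \<otimes>\<^bsub>G\<^esub> h)) p = act d (rho g) (act d (rho h) p)"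
proof -
  have "act d (rho g) (act d (rho h) p) = act d (\<lambda>i j. \<Sum>l<d. rho g i l * rho h l j) p"
    by (rule act_comp[OF assms(3)])
  also have "\<dots> = act d (rho (g \<otimes>\<^bsub>G\<^esub> h)) p"
    by (rule act_cong[OF assms(3)]) (use rep assms in \<open>simp add: is_rep_def\<close>)
  finally show ?thesis by simp
qed

lemma act_one:
  assumes "p \<in> polyring d"
  shows "act d (rho \<one>\<^bsub>G\<^esub>) p = p"
  using rep assms by (intro act_id) (auto simp: is_rep_def)

lemma coset_act:
  assumes "C \<in> rcosets\<^bsub>G\<^esub> H" "y \<in> C" "z \<in> C" "s \<in> S"
  shows "act d (rho (inv\<^bsub>G\<^esub> y)) s = act d (rho (inv\<^bsub>G\<^esub> z)) s"
proof -
  interpret group G by (rule grp)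
  obtain a where a: "a \<in> carrier G" "C = H #> a"
    using rcosetsE[OF assms(1)] by blast
  have key: "act d (rho (inv x)) s = act d (rho (inv a)) s" if xa: "x \<in> H #> a" for x
  proof -
    obtain h where h: "h \<in> H" "x = h \<otimes> a" using xa unfolding r_coset_def by blast
    have hG: "h \<in> carrier G" using h H_G by blast
    have "inv x = inv a \<otimes> inv h" using h hG a by (simp add: inv_mult_group)
    moreover have "inv h \<in> H" using h sub by (simp add: subgroup.m_inv_closed)
    ultimately have "act d (rho (inv x)) s = act d (rho (inv a)) (act d (rho (inv h)) s)"
      using act_mul hG a assms(4) by (simp add: invariants_def)
    also have "\<dots> = act d (rho (inv a)) s" using S_inv[OF assms(4) \<open>inv h \<in> H\<close>] by simp
    finally show ?thesis .
  qed
  show ?thesis using key assms(2,3) a by simp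
qed

definition rep :: "'g set \<Rightarrow> 'g" where "rep C = (SOME y. y \<in> C)"

lemma rep_in:
  assumes "C \<in> rcosets\<^bsub>G\<^esub> H" shows "rep C \<in> C" "rep C \<in> carrier G"
proof -
  interpret group G by (rule grp)
  obtain a where a: "a \<in> carrier G" "C = H #> a"
    using rcosetsE[OF assms(1)] by blast
  have "a \<in> C" using a sub by (simp add: rcos_self)
  then show "rep C \<in> C" unfolding rep_def by (rule someI)
  then show "rep C \<in> carrier G" using subgroup.rcosets_carrier[OF sub grp assms] by blast
qed

definition Tr :: "'k mpoly \<Rightarrow> 'k mpoly" where
  "Tr s = (\<Sum>C\<in>rcosets\<^bsub>G\<^esub> H. act d (rho (inv\<^bsub>G\<^esub> (rep C))) s)"

lemma bij_rcos:
  assumes "x \<in> carrier G"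
  shows "bij_betw (\<lambda>C. C #>\<^bsub>G\<^esub> x) (rcosets\<^bsub>G\<^esub> H) (rcosets\<^bsub>G\<^esub> H)"
proof -
  interpret group G by (rule grp)
  have sub_carr: "C \<subseteq> carrier G" if "C \<in> rcosets H" for C
    using subgroup.rcosets_carrier[OF sub grp that] .
  have img: "C #> y \<in> rcosets H" if C: "C \<in> rcosets H" and y: "y \<in> carrier G" for C y
  proof -
    obtain a where a: "a \<in> carrier G" "C = H #> a"
      using rcosetsE[OF C] by blast
    then have "C #> y = H #> (a \<otimes> y)" using coset_mult_assoc H_G y by simp
    then show ?thesis using a y H_G by (simp add: rcosetsI)
  qed
  have bk: "(C #> x) #> inv x = C" if "C \<in> rcosets H" for C
    using that sub_carr assms by (simp add: coset_mult_assoc)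
  show ?thesis
  proof (rule bij_betwI[where g="\<lambda>C. C #> inv x"])
    show "(\<lambda>C. C #> x) \<in> rcosets H \<rightarrow> rcosets H" using img assms by blast
    show "(\<lambda>C. C #> inv x) \<in> rcosets H \<rightarrow> rcosets H" using img assms by blast
    show "C #> x #> inv x = C" if "C \<in> rcosets H" for C using bk that by blast
    show "C #> inv x #> x = C" if "C \<in> rcosets H" for C
      using that sub_carr assms by (simp add: coset_mult_assoc)
  qed
qed

lemma Tr_R:
  assumes "s \<in> S"
  shows "Tr s \<in> R"
proof -
  interpret group G by (rule grp)
  have "Tr s \<in> polyring d"
    unfolding Tr_def by (intro subalg_sum[OF subalg_polyring] act_polyring)
  moreover have "act d (rho g) (Tr s) = Tr s" if g: "g \<in> carrier G" for g
  proof -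
    have sP: "s \<in> polyring d" using assms by (simp add: invariants_def)
    have "act d (rho g) (Tr s) = (\<Sum>C\<in>rcosets H. act d (rho (g \<otimes> inv (rep C))) s)"
      unfolding Tr_def act_sum using act_mul g rep_in sP act_polyring
      by (intro sum.cong refl) simp
    also have "\<dots> = (\<Sum>C\<in>rcosets H. act d (rho (inv (rep (C #> inv g)))) s)"
    proof (rule sum.cong[OF refl])
      fix C assume C: "C \<in> rcosets H"
      have eq: "g \<otimes> inv (rep C) = inv (rep C \<otimes> inv g)"
        using g rep_in[OF C] by (simp add: inv_mult_group)
      obtain a where a: "a \<in> carrier G" "C = H #> a"
        using rcosetsE[OF C] by blast
      have "rep C \<otimes> inv g \<in> C #> inv g"
        using rep_in[OF C] g unfolding r_coset_def by auto
      moreover have "C #> inv g \<in> rcosets H"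
        using bij_rcos[of "inv g"] g C bij_betwE by fastforce
      ultimately show "act d (rho (g \<otimes> inv (rep C))) s = act d (rho (inv (rep (C #> inv g)))) s"
        unfolding eq using coset_act rep_in assms by blast
    qed
    also have "\<dots> = Tr s"
      unfolding Tr_def using bij_rcos[of "inv g"] g
      by (intro sum.reindex_bij_betw) simp
    finally show ?thesis .
  qed
  ultimately show ?thesis by (simp add: invariants_def)
qed

lemma Tr_of_R:
  assumes "r \<in> R"
  shows "Tr r = of_nat (card (rcosets\<^bsub>G\<^esub> H)) * r"
proof -
  have "Tr r = (\<Sum>C\<in>rcosets\<^bsub>G\<^esub> H. r)"
    unfolding Tr_def using assms rep_in grp
    by (intro sum.cong refl) (simp add: R_inv group.inv_closed)
  then show ?thesis by simp
qed

lemma Tr_add: "Tr (p + q) = Tr p + Tr q"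
  by (simp add: Tr_def act_add sum.distrib)

lemma Tr_0: "Tr 0 = 0"
  by (simp add: Tr_def)

lemma Tr_sum: "Tr (sum g B) = (\<Sum>x\<in>B. Tr (g x))"
  by (induction B rule: infinite_finite_induct) (auto simp: Tr_add Tr_0)

lemma Tr_mult_R:
  assumes "r \<in> R" shows "Tr (r * p) = r * Tr p"
  unfolding Tr_def using assms rep_in grp
  by (simp add: act_mult sum_distrib_left R_inv group.inv_closed)

lemma N_nonzero: "(of_nat (card (rcosets\<^bsub>G\<^esub> H)) :: 'k) \<noteq> 0"
  using chr by (simp add: of_nat_eq_0_iff_char_dvd)

lemma transfer:
  assumes "r \<in> R" "r \<in> gen_ideal f n S"
  shows "r \<in> J"
proof -
  obtain s where s: "r = (\<Sum>i<n. f i * s i)" "\<forall>i<n. s i \<in> S"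
    using assms(2) unfolding gen_ideal_def by blast
  let ?N = "(of_nat (card (rcosets\<^bsub>G\<^esub> H)) :: 'k)"
  have "of_nat (card (rcosets\<^bsub>G\<^esub> H)) * r = Tr r"
    using Tr_of_R[OF assms(1)] by simp
  also have "\<dots> = (\<Sum>i<n. Tr (f i * s i))"
    unfolding s(1) by (rule Tr_sum)
  also have "\<dots> = (\<Sum>i<n. f i * Tr (s i))"
    by (intro sum.cong refl) (simp add: Tr_mult_R f_R)
  finally have "of_nat (card (rcosets\<^bsub>G\<^esub> H)) * r = (\<Sum>i<n. f i * Tr (s i))" .
  moreover have "(of_nat (card (rcosets\<^bsub>G\<^esub> H)) :: 'k mpoly) = mconst ?N"
    by (simp add: mconst_def)
  ultimately have eq: "mconst ?N * r = (\<Sum>i<n. f i * Tr (s i))" by metis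
  have "r = mconst (inverse ?N) * (mconst ?N * r)"
    using N_nonzero by (simp add: mult.assoc[symmetric] mconst_mult[symmetric] left_inverse)
  also have "\<dots> = mconst (inverse ?N) * (\<Sum>i<n. f i * Tr (s i))" by (simp only: eq)
  also have "\<dots> = (\<Sum>i<n. f i * (mconst (inverse ?N) * Tr (s i)))"
    by (simp add: sum_distrib_left mult.left_commute)
  finally have "r = (\<Sum>i<n. f i * (mconst (inverse ?N) * Tr (s i)))" .
  moreover have "\<forall>i<n. mconst (inverse ?N) * Tr (s i) \<in> R"
    using s(2) Tr_R subalgR by (simp add: subalg_mult subalg_mconst)
  ultimately show ?thesis unfolding J_def
    by (intro CollectI exI[of _ "\<lambda>i. mconst (inverse ?N) * Tr (s i)"]) auto
qed

lemma plus_ideal_0: "0 \<in> plus_ideal f n"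
  unfolding plus_ideal_def using subalg_0[OF subalgA]
  by (intro CollectI exI[of _ "\<lambda>_. 0"]) auto

lemma plus_ideal_add: "p \<in> plus_ideal f n \<Longrightarrow> q \<in> plus_ideal f n \<Longrightarrow> p + q \<in> plus_ideal f n"
proof -
  assume "p \<in> plus_ideal f n" "q \<in> plus_ideal f n"
  then obtain a b where "p = (\<Sum>i<n. f i * a i)" "\<forall>i<n. a i \<in> A" "q = (\<Sum>i<n. f i * b i)" "\<forall>i<n. b i \<in> A"
    unfolding plus_ideal_def by blast
  then show ?thesis unfolding plus_ideal_def using subalg_add[OF subalgA]
    by (intro CollectI exI[of _ "\<lambda>i. a i + b i"]) (auto simp: sum.distrib distrib_left)
qed

lemma I_ls: "I = ls (plus_ideal f n) R"
  by (rule lin_span_ls[OF plus_ideal_0 plus_ideal_add])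

lemma f_plus_ideal: "i < n \<Longrightarrow> f i \<in> plus_ideal f n"
  unfolding plus_ideal_def using subalg_0[OF subalgA] subalg_1[OF subalgA]
  by (intro CollectI exI[of _ "\<lambda>l. if l = i then 1 else 0"]) (auto simp: if_distrib cong: if_cong)

lemma J_I: "J \<subseteq> I"
proof
  fix y assume "y \<in> J"
  then obtain z where z: "y = (\<Sum>i<n. f i * z i)" "\<forall>i<n. z i \<in> R" unfolding J_def by blast
  then show "y \<in> I" unfolding lin_span_def using f_plus_ideal
    by (intro CollectI exI[of _ n] exI[of _ f] exI[of _ z]) auto
qed

lemma plus_ideal_R: "plus_ideal f n \<subseteq> R"
  unfolding plus_ideal_def using A_R f_R
  by (auto intro!: subalg_sum[OF subalgR] subalg_mult[OF subalgR])

lemma I_R: "I \<subseteq> R"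
  unfolding I_ls by (rule ls_subset_subalg[OF subalgR plus_ideal_R]) simp

lemma J_R: "J \<subseteq> R"
  unfolding J_def using f_R
  by (auto intro!: subalg_sum[OF subalgR] subalg_mult[OF subalgR])

lemma J_gen: "J \<subseteq> gen_ideal f n S"
  unfolding J_def gen_ideal_def using R_S by blast

lemma I_J: "I \<subseteq> J"
proof
  fix y assume "y \<in> I"
  then obtain T p where T: "y = (\<Sum>x\<in>T. p x * x)" "finite T" "T \<subseteq> R" "\<forall>x\<in>T. p x \<in> plus_ideal f n"
    unfolding I_ls ls_def by blast
  have "\<forall>x\<in>T. \<exists>a. p x = (\<Sum>i<n. f i * a i) \<and> (\<forall>i<n. a i \<in> A)"
    using T(4) unfolding plus_ideal_def by blast
  then obtain a where a: "\<And>x. x \<in> T \<Longrightarrow> p x = (\<Sum>i<n. f i * a x i) \<and> (\<forall>i<n. a x i \<in> A)"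
    by metis
  have "y = (\<Sum>x\<in>T. \<Sum>i<n. f i * (a x i * x))"
    unfolding T(1) using a by (intro sum.cong refl) (simp add: sum_distrib_right mult.assoc)
  also have "\<dots> = (\<Sum>i<n. f i * (\<Sum>x\<in>T. a x i * x))"
    by (subst sum.swap) (simp add: sum_distrib_left)
  finally have "y = (\<Sum>i<n. f i * (\<Sum>x\<in>T. a x i * x))" .
  moreover have "\<forall>i<n. (\<Sum>x\<in>T. a x i * x) \<in> R"
    using a T(3) A_R by (auto intro!: subalg_sum[OF subalgR] subalg_mult[OF subalgR])
  ultimately show "y \<in> J" unfolding J_def
    by (intro CollectI exI[of _ "\<lambda>i. \<Sum>x\<in>T. a x i * x"]) auto
qed

lemma part1: "{r \<in> R. r \<in> gen_ideal f n S} = I"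
  using transfer J_I I_J J_gen I_R by blast

end



section \<open>Grading\<close>

lemma mdeg_superset:
  assumes "finite K" "Poly_Mapping.keys m \<subseteq> K"
  shows "mdeg m = (\<Sum>i\<in>K. Poly_Mapping.lookup m i)"
  unfolding mdeg_def using assms
  by (intro sum.mono_neutral_left) (auto simp: in_keys_iff)

lemma mdeg_add: "mdeg (m1 + m2) = mdeg m1 + mdeg m2"
proof -
  let ?K = "Poly_Mapping.keys m1 \<union> Poly_Mapping.keys m2"
  have "mdeg (m1 + m2) = (\<Sum>i\<in>?K. Poly_Mapping.lookup (m1 + m2) i)"
    by (rule mdeg_superset) (auto simp: keys_add_nat)
  also have "\<dots> = mdeg m1 + mdeg m2"
    by (simp add: lookup_add sum.distrib mdeg_superset[of ?K])
  finally show ?thesis .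
qed

lemma mdeg_0 [simp]: "mdeg 0 = 0"
  by (simp add: mdeg_def)

lemma mdeg_single [simp]: "mdeg (Poly_Mapping.single i k) = k"
  by (simp add: mdeg_def)

definition hc :: "nat \<Rightarrow> 'k::comm_ring_1 mpoly \<Rightarrow> 'k mpoly" where
  "hc e p = (\<Sum>m\<in>{m \<in> Poly_Mapping.keys p. mdeg m = e}. Poly_Mapping.single m (Poly_Mapping.lookup p m))"

lemma lookup_hc: "Poly_Mapping.lookup (hc e p) m = (if mdeg m = e then Poly_Mapping.lookup p m else 0)"
proof -
  have "Poly_Mapping.lookup (hc e p) m =
    (\<Sum>m'\<in>{m \<in> Poly_Mapping.keys p. mdeg m = e}. if m' = m then Poly_Mapping.lookup p m' else 0)"
    unfolding hc_def lookup_sum by (intro sum.cong refl) (simp add: lookup_single when_def)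
  also have "\<dots> = (if mdeg m = e then Poly_Mapping.lookup p m else 0)"
    by (simp add: sum.delta' in_keys_iff)
  finally show ?thesis .
qed

lemma keys_hc: "Poly_Mapping.keys (hc e p) \<subseteq> Poly_Mapping.keys p"
  by (auto simp: in_keys_iff lookup_hc split: if_splits)

lemma hc_add: "hc e (p + q) = hc e p + hc e q"
  by (rule poly_mapping_eqI) (simp add: lookup_hc lookup_add)

lemma hc_0 [simp]: "hc e 0 = 0"
  by (rule poly_mapping_eqI) (simp add: lookup_hc)

lemma hc_sum: "hc e (sum g B) = (\<Sum>x\<in>B. hc e (g x))"
  by (induction B rule: infinite_finite_induct) (auto simp: hc_add)

lemma hc_mconst_mult: "hc e (mconst c * p) = mconst c * hc e p"
  by (rule poly_mapping_eqI) (simp add: lookup_hc lookup_mconst_mult)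

lemma homog_hc: "homog_of_deg (hc e p) e"
  unfolding homog_of_deg_def by (auto simp: in_keys_iff lookup_hc split: if_splits)

lemma hc_homog: "homog_of_deg p a \<Longrightarrow> hc e p = (if e = a then p else 0)"
  unfolding homog_of_deg_def
  by (rule poly_mapping_eqI) (auto simp: lookup_hc in_keys_iff)

lemma hc_decomp: "p = (\<Sum>e\<in>mdeg ` Poly_Mapping.keys p. hc e p)"
proof (rule poly_mapping_eqI)
  fix m
  have "Poly_Mapping.lookup (\<Sum>e\<in>mdeg ` Poly_Mapping.keys p. hc e p) m =
        (\<Sum>e\<in>mdeg ` Poly_Mapping.keys p. if e = mdeg m then Poly_Mapping.lookup p m else 0)"
    by (simp add: lookup_sum lookup_hc eq_commute)
  also have "\<dots> = Poly_Mapping.lookup p m"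
    by (auto simp: sum.delta' in_keys_iff)
  finally show "Poly_Mapping.lookup p m = Poly_Mapping.lookup (\<Sum>e\<in>mdeg ` Poly_Mapping.keys p. hc e p) m" ..
qed

lemma homog_0 [simp]: "homog_of_deg 0 e"
  by (simp add: homog_of_deg_def)

lemma homog_add: "homog_of_deg p e \<Longrightarrow> homog_of_deg q e \<Longrightarrow> homog_of_deg (p + q) e"
  unfolding homog_of_deg_def by (auto dest!: subsetD[OF keys_add])

lemma homog_sum: "(\<And>x. x \<in> B \<Longrightarrow> homog_of_deg (g x) e) \<Longrightarrow> homog_of_deg (sum g B) e"
  by (induction B rule: infinite_finite_induct) (auto intro: homog_add)

lemma homog_mult: "homog_of_deg p a \<Longrightarrow> homog_of_deg q b \<Longrightarrow> homog_of_deg (p * q) (a + b)"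
  unfolding homog_of_deg_def by (auto dest!: subsetD[OF keys_mult] simp: mdeg_add)

lemma homog_1: "homog_of_deg 1 0"
  by (simp add: homog_of_deg_def)

lemma homog_mconst: "homog_of_deg (mconst c) 0"
  by (simp add: homog_of_deg_def mconst_def)

lemma homog_mconst_mult: "homog_of_deg p a \<Longrightarrow> homog_of_deg (mconst c * p) a"
  using homog_mult[OF homog_mconst] by fastforce

lemma homog_power: "homog_of_deg p a \<Longrightarrow> homog_of_deg (p ^ k) (k * a)"
  by (induction k) (auto simp: homog_1 dest: homog_mult)

lemma homog_prod: "(\<And>x. x \<in> B \<Longrightarrow> homog_of_deg (g x) (dg x)) \<Longrightarrow> homog_of_deg (prod g B) (sum dg B)"
  by (induction B rule: infinite_finite_induct) (auto simp: homog_1 dest: homog_mult)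

lemma homog_single: "homog_of_deg (Poly_Mapping.single m c) (mdeg m)"
  by (simp add: homog_of_deg_def)

lemma homog_mvar: "homog_of_deg (mvar i) 1"
  by (simp add: homog_of_deg_def mvar_def)

lemma homog_lin: "homog_of_deg (lin d A j) 1"
  unfolding lin_def by (intro homog_sum homog_mconst_mult homog_mvar)

lemma homog_act_single: "homog_of_deg (act d A (Poly_Mapping.single m c)) (mdeg m)"
proof -
  have "homog_of_deg (mon (lin d A) m) (\<Sum>i\<in>Poly_Mapping.keys m. Poly_Mapping.lookup m i * 1)"
    unfolding mon_def by (intro homog_prod homog_power homog_lin)
  then show ?thesis
    by (simp add: act_lin subst_single mdeg_def homog_mconst_mult)
qed

lemma act_hc: "act d A (hc e p) = hc e (act d A p)"
proof -
  have "act d A (hc e p) = (\<Sum>m\<in>{m \<in> Poly_Mapping.keys p. mdeg m = e}.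
           act d A (Poly_Mapping.single m (Poly_Mapping.lookup p m)))"
    by (simp add: hc_def act_sum)
  also have "\<dots> = (\<Sum>m\<in>Poly_Mapping.keys p. if mdeg m = e then
           act d A (Poly_Mapping.single m (Poly_Mapping.lookup p m)) else 0)"
    by (simp add: sum.inter_filter)
  also have "\<dots> = (\<Sum>m\<in>Poly_Mapping.keys p. hc e (act d A (Poly_Mapping.single m (Poly_Mapping.lookup p m))))"
    by (intro sum.cong refl) (simp add: hc_homog[OF homog_act_single] eq_commute)
  also have "\<dots> = hc e (act d A p)"
    by (subst (2) pm_decomp[of p]) (simp add: act_sum hc_sum)
  finally show ?thesis .
qed

lemma hc_mult_homog:
  assumes "homog_of_deg p a"
  shows "hc e (p * q) = (if a \<le> e then p * hc (e - a) q else 0)"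
proof -
  let ?s = "\<lambda>m. Poly_Mapping.single m (Poly_Mapping.lookup q m)"
  have "hc e (p * q) = (\<Sum>m\<in>Poly_Mapping.keys q. hc e (p * ?s m))"
    by (subst pm_decomp[of q]) (simp add: sum_distrib_left hc_sum)
  also have "\<dots> = (\<Sum>m\<in>Poly_Mapping.keys q. if e = a + mdeg m then p * ?s m else 0)"
    by (intro sum.cong refl) (simp add: hc_homog[OF homog_mult[OF assms homog_single]])
  also have "\<dots> = (if a \<le> e then p * hc (e - a) q else 0)"
  proof (cases "a \<le> e")
    case True
    have "p * hc (e - a) q = (\<Sum>m\<in>Poly_Mapping.keys q. p * hc (e - a) (?s m))"
      by (subst pm_decomp[of q]) (simp add: sum_distrib_left hc_sum)
    also have "\<dots> = (\<Sum>m\<in>Poly_Mapping.keys q. if e = a + mdeg m then p * ?s m else 0)"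
      using True by (intro sum.cong refl) (auto simp: hc_homog[OF homog_single])
    finally show ?thesis using True by simp
  next
    case False then show ?thesis by simp
  qed
  finally show ?thesis .
qed

lemma hc_polyring: "p \<in> polyring d \<Longrightarrow> hc e p \<in> polyring d"
  unfolding polyring_def using keys_hc by blast

lemma hc_invariants: "p \<in> invariants d rho K \<Longrightarrow> hc e p \<in> invariants d rho K"
  unfolding invariants_def by (auto simp: hc_polyring act_hc)

lemma mon_single_var: "mon \<sigma> (Poly_Mapping.single i 1) = \<sigma> i"
  by (simp add: mon_def)

context inv_setup
begin

lemma hc_R: "r \<in> R \<Longrightarrow> hc e r \<in> R"
  by (rule hc_invariants)

lemma f_in_plus: "i < n \<Longrightarrow> a \<in> A \<Longrightarrow> f i * a \<in> plus_ideal f n"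
  unfolding plus_ideal_def using subalg_0[OF subalgA]
  by (intro CollectI exI[of _ "\<lambda>l. if l = i then a else 0"]) (auto simp: if_distrib cong: if_cong)

lemma A_decomp:
  assumes "a \<in> A"
  shows "\<exists>c. a - mconst c \<in> plus_ideal f n"
proof -
  define D where "D = {x. \<exists>c. x - mconst c \<in> plus_ideal f n}"
  have D_add: "x + y \<in> D" if xyD: "x \<in> D" "y \<in> D" for x y
  proof -
    obtain c1 c2 where "x - mconst c1 \<in> plus_ideal f n" "y - mconst c2 \<in> plus_ideal f n"
      using xyD unfolding D_def by blast
    then have "(x - mconst c1) + (y - mconst c2) \<in> plus_ideal f n" by (rule plus_ideal_add)
    then have "x + y - mconst (c1 + c2) \<in> plus_ideal f n" by (simp add: mconst_add algebra_simps)
    then show ?thesis unfolding D_def by blast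
  qed
  obtain q where q: "a = subst f q" "q \<in> polyring n"
    using assms unfolding alg_closure_def by blast
  have trm: "mconst (Poly_Mapping.lookup q m) * mon f m \<in> D" if m: "m \<in> Poly_Mapping.keys q" for m
  proof (cases "m = 0")
    case True
    then show ?thesis unfolding D_def using plus_ideal_0 by (auto intro!: exI[of _ "Poly_Mapping.lookup q m"])
  next
    case False
    then obtain i where i: "i \<in> Poly_Mapping.keys m"
      by (metis keys_eq_empty ex_in_conv)
    have "i < n" using q(2) m i polyring_var by blast
    define m' where "m' = m - Poly_Mapping.single i 1"
    have mm: "m = Poly_Mapping.single i 1 + m'"
      unfolding m'_def using i
      by (intro poly_mapping_eqI) (auto simp: lookup_add lookup_minus lookup_single when_def in_keys_iff)
    have km': "Poly_Mapping.keys m' \<subseteq> Poly_Mapping.keys m"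
      unfolding m'_def by (auto simp: in_keys_iff lookup_minus)
    have "Poly_Mapping.single m' 1 \<in> polyring n"
      using q(2) m km' unfolding polyring_def by auto
    then have "subst f (Poly_Mapping.single m' 1) \<in> A" unfolding alg_closure_def by blast
    then have "mon f m' \<in> A" by (simp add: subst_single)
    then have "mconst (Poly_Mapping.lookup q m) * mon f m' \<in> A"
      by (intro subalg_mult[OF subalgA] subalg_mconst[OF subalgA])
    then have "f i * (mconst (Poly_Mapping.lookup q m) * mon f m') \<in> plus_ideal f n"
      using f_in_plus \<open>i < n\<close> by blast
    moreover have "mconst (Poly_Mapping.lookup q m) * mon f m = f i * (mconst (Poly_Mapping.lookup q m) * mon f m')"
    proof -
      have "mon f m = f i * mon f m'" by (subst mm) (simp only: mon_add mon_single_var)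
      then show ?thesis by (simp add: algebra_simps)
    qed
    ultimately have "mconst (Poly_Mapping.lookup q m) * mon f m \<in> plus_ideal f n"
      by (simp only:)
    then have "mconst (Poly_Mapping.lookup q m) * mon f m - mconst 0 \<in> plus_ideal f n"
      by simp
    then show ?thesis unfolding D_def by blast
  qed
  have "0 \<in> D" unfolding D_def using plus_ideal_0 by (auto intro!: exI[of _ 0])
  have "(\<Sum>m\<in>K. mconst (Poly_Mapping.lookup q m) * mon f m) \<in> D" if "K \<subseteq> Poly_Mapping.keys q" for K
    using that
  proof (induction K rule: infinite_finite_induct)
    case (infinite A) then show ?case using \<open>0 \<in> D\<close> by simp
  next
    case empty then show ?case using \<open>0 \<in> D\<close> by simp
  next
    case (insert x F) then show ?case using D_add trm by simp
  qed
  then have "a \<in> D" unfolding q(1) subst_def mon_def[symmetric] by blast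
  then show ?thesis unfolding D_def by blast
qed

lemma A_ls: "lin_span A X = ls A X"
  by (rule lin_span_ls[OF subalg_0[OF subalgA] subalg_add[OF subalgA]])

lemma nakayama:
  assumes N: "finite N" "N \<subseteq> R" "\<forall>x\<in>N. is_homog x"
    and sp: "\<forall>r\<in>R. \<exists>c. r - (\<Sum>x\<in>N. mconst (c x) * x) \<in> I"
  shows "R \<subseteq> lin_span A N"
proof -
  let ?L = "ls A N"
  have L0: "0 \<in> ?L" by (rule ls_0)
  have Lsum: "sum g B \<in> ?L" if "\<And>i. i \<in> B \<Longrightarrow> g i \<in> ?L" for g :: "'c \<Rightarrow> 'k mpoly" and B
    by (rule ls_sum[OF subalg_0[OF subalgA] subalg_add[OF subalgA]]) (use that in auto)
  have LA: "b * y \<in> ?L" if "b \<in> A" "y \<in> ?L" for b y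
    by (rule ls_multA[OF _ that]) (simp add: subalg_mult[OF subalgA])
  obtain df where df: "\<And>i. i < n \<Longrightarrow> df i > 0 \<and> homog_of_deg (f i) (df i)"
    using hs unfolding hsop_def by metis
  obtain dx where dx: "\<And>x. x \<in> N \<Longrightarrow> homog_of_deg x (dx x)"
    using N(3) unfolding is_homog_def by metis
  have hom: "r \<in> ?L" if "r \<in> R" "homog_of_deg r e" for r e
    using that
  proof (induction e arbitrary: r rule: less_induct)
    case (less e)
    obtain c where c: "r - (\<Sum>x\<in>N. mconst (c x) * x) \<in> I" using sp less.prems(1) by blast
    then have "r - (\<Sum>x\<in>N. mconst (c x) * x) \<in> J" using I_J by blast
    then obtain y where y: "r - (\<Sum>x\<in>N. mconst (c x) * x) = (\<Sum>i<n. f i * y i)" "\<forall>i<n. y i \<in> R"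
      unfolding J_def by blast
    have req: "r = (\<Sum>x\<in>N. mconst (c x) * x) + (\<Sum>i<n. f i * y i)"
      using y(1) unfolding diff_eq_eq by (simp add: add.commute)
    have "r = hc e r" using hc_homog[OF less.prems(2)] by simp
    also have "\<dots> = hc e ((\<Sum>x\<in>N. mconst (c x) * x) + (\<Sum>i<n. f i * y i))"
      by (subst req, rule refl)
    also have "\<dots> = (\<Sum>x\<in>N. mconst (c x) * hc e x) + (\<Sum>i<n. hc e (f i * y i))"
      by (simp add: hc_add hc_sum hc_mconst_mult)
    finally have r: "r = (\<Sum>x\<in>N. mconst (c x) * hc e x) + (\<Sum>i<n. hc e (f i * y i))" .
    have 1: "(\<Sum>x\<in>N. mconst (c x) * hc e x) \<in> ?L"
    proof (rule Lsum)
      fix x assume x: "x \<in> N"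
      show "mconst (c x) * hc e x \<in> ?L"
        using hc_homog[OF dx[OF x], of e] x L0
        by (auto intro: ls_single subalg_mconst[OF subalgA])
    qed
    have 2: "(\<Sum>i<n. hc e (f i * y i)) \<in> ?L"
    proof (rule Lsum)
      fix i assume "i \<in> {..<n}"
      then have i: "i < n" by simp
      show "hc e (f i * y i) \<in> ?L"
      proof (cases "df i \<le> e")
        case True
        have "hc (e - df i) (y i) \<in> ?L"
          using df[OF i] hc_R y(2) i homog_hc True
          by (intro less.IH[of "e - df i"]) auto
        then have "f i * hc (e - df i) (y i) \<in> ?L"
          using LA f_in_alg_closure i by blast
        then show ?thesis using hc_mult_homog[of "f i" "df i" e "y i"] df[OF i] True by simp
      next
        case False
        then show ?thesis using hc_mult_homog[of "f i" "df i" e "y i"] df[OF i] L0 by simp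
      qed
    qed
    show ?case
      by (subst r) (rule ls_add[OF subalg_0[OF subalgA] subalg_add[OF subalgA] 1 2])
  qed
  show ?thesis
  proof
    fix r assume r: "r \<in> R"
    have "(\<Sum>e\<in>mdeg ` Poly_Mapping.keys r. hc e r) \<in> ?L"
      using hom hc_R r homog_hc by (intro Lsum) blast
    then show "r \<in> lin_span A N" using hc_decomp[of r] A_ls by simp
  qed
qed

lemma lin_span_A_R: "X \<subseteq> R \<Longrightarrow> lin_span A X \<subseteq> R"
  unfolding A_ls by (rule ls_subset_subalg[OF subalgR A_R])

lemma span_mod_I:
  assumes "finite M" "M \<subseteq> R" "R = lin_span A M"
  shows "\<forall>r\<in>R. \<exists>c. r - (\<Sum>x\<in>M. mconst (c x) * x) \<in> I"
proof
  fix r assume "r \<in> R"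
  then have "r \<in> ls A M" using assms(3) A_ls by simp
  then obtain T a where T: "r = (\<Sum>x\<in>T. a x * x)" "finite T" "T \<subseteq> M" "\<forall>x\<in>T. a x \<in> A"
    unfolding ls_def by blast
  have "\<forall>x\<in>T. \<exists>c. a x - mconst c \<in> plus_ideal f n" using T(4) A_decomp by blast
  then obtain c where c: "\<And>x. x \<in> T \<Longrightarrow> a x - mconst (c x) \<in> plus_ideal f n" by metis
  define c' where "c' x = (if x \<in> T then c x else 0)" for x
  have "(\<Sum>x\<in>M. mconst (c' x) * x) = (\<Sum>x\<in>T. mconst (c x) * x)"
    using T(2,3) assms(1) unfolding c'_def
    by (intro sum.mono_neutral_cong_right) auto
  then have "r - (\<Sum>x\<in>M. mconst (c' x) * x) = (\<Sum>x\<in>T. (a x - mconst (c x)) * x)"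
    by (simp add: T(1) sum_subtractf[symmetric] algebra_simps)
  also have "\<dots> \<in> ls (plus_ideal f n) R"
    unfolding ls_def
    by (intro CollectI exI[of _ T] exI[of _ "\<lambda>x. a x - mconst (c x)"]) (use T assms(2) c in auto)
  finally show "\<exists>c. r - (\<Sum>x\<in>M. mconst (c x) * x) \<in> I" using I_ls by blast
qed

end



section \<open>Linear algebra modulo a subspace\<close>

definition smul :: "'k::field \<Rightarrow> 'k mpoly \<Rightarrow> 'k mpoly" where
  "smul c p = mconst c * p"

interpretation mpv: vector_space "smul :: 'k::field \<Rightarrow> 'k mpoly \<Rightarrow> 'k mpoly"
  by unfold_locales (simp_all add: smul_def algebra_simps mconst_add mconst_mult)

definition fsub :: "'k::field mpoly set \<Rightarrow> bool" where
  "fsub I \<longleftrightarrow> 0 \<in> I \<and> (\<forall>x\<in>I. \<forall>y\<in>I. x + y \<in> I) \<and> (\<forall>c. \<forall>x\<in>I. mconst c * x \<in> I)"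

definition indep_mod :: "'k::field mpoly set \<Rightarrow> 'k mpoly set \<Rightarrow> bool" where
  "indep_mod I X \<longleftrightarrow> (\<forall>c. (\<Sum>x\<in>X. mconst (c x) * x) \<in> I \<longrightarrow> (\<forall>x\<in>X. c x = 0))"

definition spans_mod :: "'k::field mpoly set \<Rightarrow> 'k mpoly set \<Rightarrow> 'k mpoly \<Rightarrow> bool" where
  "spans_mod I X r \<longleftrightarrow> (\<exists>c. r - (\<Sum>x\<in>X. mconst (c x) * x) \<in> I)"

lemma fsub_subspace: "fsub I \<Longrightarrow> mpv.subspace I"
  by (simp add: fsub_def mpv.subspace_def smul_def)

lemma fsub_diff: "fsub I \<Longrightarrow> x \<in> I \<Longrightarrow> y \<in> I \<Longrightarrow> x - y \<in> I"
  using mpv.subspace_diff[OF fsub_subspace] by blast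

lemma fsub_sum: "fsub I \<Longrightarrow> (\<And>x. x \<in> B \<Longrightarrow> g x \<in> I) \<Longrightarrow> sum g B \<in> I"
  using mpv.subspace_sum[OF fsub_subspace] by blast

lemma fsub_mult: "fsub I \<Longrightarrow> x \<in> I \<Longrightarrow> mconst c * x \<in> I"
  by (simp add: fsub_def)

lemma sum_in_span: "(\<Sum>x\<in>X. mconst (c x) * x) \<in> mpv.span X"
  by (intro mpv.span_sum) (metis mpv.span_base mpv.span_scale smul_def)

lemma sum_ind_mconst:
  assumes "finite X" "x \<in> X"
  shows "(\<Sum>y\<in>X. mconst (if y = x then 1 else 0) * y) = x"
proof -
  have "(\<Sum>y\<in>X. mconst (if y = x then 1 else 0) * y) = (\<Sum>y\<in>X. if y = x then y else 0)"
    by (rule sum.cong) auto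
  then show ?thesis using assms by simp
qed

lemma steinitz_mod:
  assumes I: "fsub I" and fin: "finite X" "finite Y" and ind: "indep_mod I X"
    and sp: "\<forall>x\<in>X. spans_mod I Y x"
  shows "card X \<le> card Y"
proof -
  let ?U = "mpv.span (X \<union> Y)"
  let ?P = "?U \<inter> I"
  obtain B where B: "B \<subseteq> ?P" "mpv.independent B" "?P \<subseteq> mpv.span B" "card B = mpv.dim ?P"
    by (rule mpv.basis_exists)
  have finB: "finite B"
    using mpv.independent_span_bound[of "X \<union> Y" B] fin B by auto
  have BI: "mpv.span B \<subseteq> I"
    using B(1) mpv.span_minimal[OF _ fsub_subspace[OF I]] by blast
  have disj: "X \<inter> B = {}"
  proof (rule ccontr)
    assume "X \<inter> B \<noteq> {}"
    then obtain x where x: "x \<in> X" "x \<in> B" by blast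
    define c where "c y = (if y = x then (1::'a) else 0)" for y
    have "(\<Sum>y\<in>X. mconst (c y) * y) = x"
      unfolding c_def by (rule sum_ind_mconst[OF fin(1) x(1)])
    then have "(\<Sum>y\<in>X. mconst (c y) * y) \<in> I" using x B(1) by auto
    then show False using ind x unfolding indep_mod_def c_def by fastforce
  qed
  have indXB: "mpv.independent (X \<union> B)"
    unfolding mpv.independent_explicit_module
  proof (intro allI impI)
    fix t u v
    assume t: "finite t" "t \<subseteq> X \<union> B" and s0: "(\<Sum>v\<in>t. smul (u v) v) = 0" and v: "v \<in> t"
    let ?tX = "t \<inter> X" and ?tB = "t - X"
    have split: "(\<Sum>v\<in>t. smul (u v) v) = (\<Sum>v\<in>?tX. smul (u v) v) + (\<Sum>v\<in>?tB. smul (u v) v)"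
      using t(1) by (rule sum.Int_Diff)
    have tB: "?tB \<subseteq> B" using t by blast
    have inB: "(\<Sum>v\<in>?tB. smul (u v) v) \<in> mpv.span B"
      using tB by (intro mpv.span_sum) (auto intro: mpv.span_scale mpv.span_base)
    have "(\<Sum>v\<in>?tX. smul (u v) v) = - (\<Sum>v\<in>?tB. smul (u v) v)"
      using s0 split by (simp add: eq_neg_iff_add_eq_0)
    also have "\<dots> \<in> I" using inB BI mpv.span_neg[OF inB] by blast
    finally have tXI: "(\<Sum>v\<in>?tX. smul (u v) v) \<in> I" .
    define c where "c x = (if x \<in> t then u x else 0)" for x
    have "(\<Sum>x\<in>X. mconst (c x) * x) = (\<Sum>v\<in>?tX. smul (u v) v)"
      using fin(1) unfolding c_def smul_def
      by (intro sum.mono_neutral_cong_right) auto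
    then have "(\<Sum>x\<in>X. mconst (c x) * x) \<in> I" using tXI by simp
    then have cz: "\<forall>x\<in>X. c x = 0" using ind unfolding indep_mod_def by blast
    then have "(\<Sum>v\<in>?tX. smul (u v) v) = 0"
      unfolding smul_def c_def by (intro sum.neutral) auto
    then have zB: "(\<Sum>v\<in>?tB. smul (u v) v) = 0" using s0 split by simp
    have finB': "finite ?tB" using t(1) by simp
    have uB: "\<forall>w\<in>?tB. u w = 0"
    proof
      fix w assume "w \<in> ?tB"
      then show "u w = 0" by (rule mpv.independentD[OF B(2) finB' tB zB])
    qed
    show "u v = 0"
    proof (cases "v \<in> X")
      case True then show ?thesis using cz v unfolding c_def by auto
    next
      case False then show ?thesis using uB v by auto
    qed
  qed
  have XB_span: "X \<union> B \<subseteq> mpv.span (Y \<union> B)"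
  proof
    fix x assume "x \<in> X \<union> B"
    then show "x \<in> mpv.span (Y \<union> B)"
    proof
      assume x: "x \<in> X"
      obtain c where c: "x - (\<Sum>y\<in>Y. mconst (c y) * y) \<in> I" using sp x unfolding spans_mod_def by blast
      have wY: "(\<Sum>y\<in>Y. mconst (c y) * y) \<in> mpv.span Y" by (rule sum_in_span)
      have "(\<Sum>y\<in>Y. mconst (c y) * y) \<in> ?U"
        using wY mpv.span_mono[of Y "X \<union> Y"] by blast
      moreover have "x \<in> ?U" using x mpv.span_base by blast
      ultimately have "x - (\<Sum>y\<in>Y. mconst (c y) * y) \<in> ?P" using c mpv.span_diff by blast
      then have "x - (\<Sum>y\<in>Y. mconst (c y) * y) \<in> mpv.span (Y \<union> B)"
        using B(3) mpv.span_mono[of B "Y \<union> B"] by blast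
      moreover have "(\<Sum>y\<in>Y. mconst (c y) * y) \<in> mpv.span (Y \<union> B)"
        using wY mpv.span_mono[of Y "Y \<union> B"] by blast
      ultimately show ?thesis using mpv.span_add by fastforce
    next
      assume "x \<in> B" then show ?thesis by (simp add: mpv.span_base)
    qed
  qed
  have "card (X \<union> B) \<le> card (Y \<union> B)"
    using mpv.independent_span_bound[OF _ indXB XB_span] fin finB by blast
  also have "\<dots> \<le> card Y + card B" by (rule card_Un_le)
  finally show ?thesis using disj fin finB by (simp add: card_Un_disjoint)
qed

lemma spans_self: "finite Y \<Longrightarrow> x \<in> Y \<Longrightarrow> fsub I \<Longrightarrow> spans_mod I Y x"
  unfolding spans_mod_def
  by (rule exI[of _ "\<lambda>y. if y = x then 1 else 0"]) (simp add: sum_ind_mconst fsub_def)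

lemma spans_trans:
  assumes I: "fsub I" and fin: "finite X" "finite Y"
    and XY: "\<forall>x\<in>X. spans_mod I Y x" and r: "spans_mod I X r"
  shows "spans_mod I Y r"
proof -
  obtain c where c: "r - (\<Sum>x\<in>X. mconst (c x) * x) \<in> I" using r unfolding spans_mod_def by blast
  have "\<forall>x\<in>X. \<exists>e. x - (\<Sum>y\<in>Y. mconst (e y) * y) \<in> I"
    using XY unfolding spans_mod_def .
  then obtain e where e0: "\<forall>x\<in>X. x - (\<Sum>y\<in>Y. mconst (e x y) * y) \<in> I"
    by (rule bchoice[THEN exE])
  then have e: "\<And>x. x \<in> X \<Longrightarrow> x - (\<Sum>y\<in>Y. mconst (e x y) * y) \<in> I" by blast
  have sw: "(\<Sum>y\<in>Y. mconst (\<Sum>x\<in>X. c x * e x y) * y) = (\<Sum>x\<in>X. mconst (c x) * (\<Sum>y\<in>Y. mconst (e x y) * y))"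
    by (simp add: mconst_sum mconst_mult sum_distrib_left sum_distrib_right mult.assoc) (rule sum.swap)
  have "r - (\<Sum>y\<in>Y. mconst (\<Sum>x\<in>X. c x * e x y) * y)
        = (r - (\<Sum>x\<in>X. mconst (c x) * x)) + (\<Sum>x\<in>X. mconst (c x) * (x - (\<Sum>y\<in>Y. mconst (e x y) * y)))"
    unfolding sw by (simp add: right_diff_distrib sum_subtractf)
  also have "\<dots> \<in> I"
  proof -
    have "(\<Sum>x\<in>X. mconst (c x) * (x - (\<Sum>y\<in>Y. mconst (e x y) * y))) \<in> I"
      by (rule fsub_sum[OF I]) (use e I in \<open>simp add: fsub_mult\<close>)
    then show ?thesis using c I by (simp add: fsub_def)
  qed
  finally show ?thesis unfolding spans_mod_def by (rule exI[of _ "\<lambda>y. \<Sum>x\<in>X. c x * e x y"])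
qed

lemma spans_mono:
  assumes "finite Y'" "Y \<subseteq> Y'" "spans_mod I Y r"
  shows "spans_mod I Y' r"
proof -
  obtain c where c: "r - (\<Sum>x\<in>Y. mconst (c x) * x) \<in> I" using assms(3) unfolding spans_mod_def by blast
  have "(\<Sum>x\<in>Y'. mconst (if x \<in> Y then c x else 0) * x) = (\<Sum>x\<in>Y. mconst (c x) * x)"
    using assms(1,2) by (intro sum.mono_neutral_cong_right) auto
  then show ?thesis using c unfolding spans_mod_def
    by (intro exI[of _ "\<lambda>x. if x \<in> Y then c x else 0"]) simp
qed

lemma not_indep_mod:
  assumes I: "fsub I" and fin: "finite X" and ni: "\<not> indep_mod I X"
  shows "\<exists>x0\<in>X. spans_mod I (X - {x0}) x0"
proof -
  obtain c x0 where c: "(\<Sum>x\<in>X. mconst (c x) * x) \<in> I" "x0 \<in> X" "c x0 \<noteq> 0"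
    using ni unfolding indep_mod_def by blast
  have "(\<Sum>x\<in>X. mconst (c x) * x) = mconst (c x0) * x0 + (\<Sum>x\<in>X - {x0}. mconst (c x) * x)"
    using fin c(2) by (simp add: sum.remove)
  then have "mconst (inverse (c x0)) * (\<Sum>x\<in>X. mconst (c x) * x)
      = x0 - (\<Sum>x\<in>X - {x0}. mconst (- inverse (c x0) * c x) * x)"
    using c(3) by (simp add: distrib_left sum_distrib_left mult.assoc[symmetric] mconst_mult[symmetric]
        mconst_uminus sum_negf)
  moreover have "mconst (inverse (c x0)) * (\<Sum>x\<in>X. mconst (c x) * x) \<in> I"
    using c(1) I by (simp add: fsub_mult)
  ultimately have "x0 - (\<Sum>x\<in>X - {x0}. mconst (- inverse (c x0) * c x) * x) \<in> I"
    by (simp only:)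
  then have "spans_mod I (X - {x0}) x0"
    unfolding spans_mod_def by (rule exI[of _ "\<lambda>x. - inverse (c x0) * c x"])
  then show ?thesis using c(2) by blast
qed

lemma indep_insert:
  assumes I: "fsub I" and fin: "finite X" and ind: "indep_mod I X" and ns: "\<not> spans_mod I X r"
  shows "indep_mod I (insert r X) \<and> r \<notin> X"
proof
  show rX: "r \<notin> X" using spans_self[OF fin _ I] ns by blast
  show "indep_mod I (insert r X)"
    unfolding indep_mod_def
  proof (intro allI impI)
    fix c assume c: "(\<Sum>x\<in>insert r X. mconst (c x) * x) \<in> I"
    then have c': "mconst (c r) * r + (\<Sum>x\<in>X. mconst (c x) * x) \<in> I"
      using fin rX by simp
    have cr: "c r = 0"
    proof (rule ccontr)
      assume "c r \<noteq> 0"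
      have "mconst (inverse (c r)) * (mconst (c r) * r + (\<Sum>x\<in>X. mconst (c x) * x))
          = r - (\<Sum>x\<in>X. mconst (- inverse (c r) * c x) * x)"
        using \<open>c r \<noteq> 0\<close> by (simp add: distrib_left sum_distrib_left mult.assoc[symmetric]
            mconst_mult[symmetric] mconst_uminus sum_negf)
      moreover have "mconst (inverse (c r)) * (mconst (c r) * r + (\<Sum>x\<in>X. mconst (c x) * x)) \<in> I"
        using c' I by (simp add: fsub_mult)
      ultimately have "r - (\<Sum>x\<in>X. mconst (- inverse (c r) * c x) * x) \<in> I"
        by (simp only:)
      then have "spans_mod I X r"
        unfolding spans_mod_def by (rule exI[of _ "\<lambda>x. - inverse (c r) * c x"])
      then show False using ns by blast
    qed
    then have "(\<Sum>x\<in>X. mconst (c x) * x) \<in> I" using c' by simp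
    then show "\<forall>x\<in>insert r X. c x = 0" using ind cr unfolding indep_mod_def by blast
  qed
qed



context inv_setup
begin

lemma J_fsub: "fsub J"
  unfolding fsub_def
proof (intro conjI ballI allI)
  show "0 \<in> J" unfolding J_def using subalg_0[OF subalgR]
    by (intro CollectI exI[of _ "\<lambda>_. 0"]) auto
next
  fix x y assume "x \<in> J" "y \<in> J"
  then obtain a b where "x = (\<Sum>i<n. f i * a i)" "\<forall>i<n. a i \<in> R" "y = (\<Sum>i<n. f i * b i)" "\<forall>i<n. b i \<in> R"
    unfolding J_def by blast
  then show "x + y \<in> J" unfolding J_def using subalg_add[OF subalgR]
    by (intro CollectI exI[of _ "\<lambda>i. a i + b i"]) (auto simp: sum.distrib distrib_left)
next
  fix c x assume "x \<in> J"
  then obtain a where "x = (\<Sum>i<n. f i * a i)" "\<forall>i<n. a i \<in> R"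
    unfolding J_def by blast
  then show "mconst c * x \<in> J" unfolding J_def using subalg_mult[OF subalgR] subalg_mconst[OF subalgR]
    by (intro CollectI exI[of _ "\<lambda>i. mconst c * a i"]) (auto simp: sum_distrib_left mult.left_commute)
qed

lemma I_fsub: "fsub I"
  using J_fsub I_J J_I by (metis subset_antisym)

lemma part3:
  assumes GR: "\<G> \<subseteq> R" and Gh: "\<forall>g\<in>\<G>. is_homog g" and Gfin: "finite \<G>"
    and M: "min_hom_gen_set A R M" "finite M"
    and degs: "image_mset hdeg (mset_set \<G>) = image_mset hdeg (mset_set M)"
  shows "R = lin_span A \<G> \<longleftrightarrow>
         (\<forall>c :: 'k mpoly \<Rightarrow> 'k. (\<Sum>g\<in>\<G>. mconst (c g) * g) \<in> gen_ideal f n S \<longrightarrow> (\<forall>g\<in>\<G>. c g = 0))"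
proof -
  have cardeq: "card \<G> = card M"
    using arg_cong[OF degs, of size] by simp
  have MR: "M \<subseteq> R" and Mh: "\<forall>x\<in>M. is_homog x" and RM: "R = lin_span A M"
    and Mmin: "\<And>Y. Y \<subset> M \<Longrightarrow> R \<noteq> lin_span A Y"
    using M(1) unfolding min_hom_gen_set_def by blast+
  have spM: "\<forall>r\<in>R. spans_mod I M r"
    using span_mod_I[OF M(2) MR RM] unfolding spans_mod_def .
  have indM: "indep_mod I M"
  proof (rule ccontr)
    assume "\<not> indep_mod I M"
    then obtain x0 where x0: "x0 \<in> M" "spans_mod I (M - {x0}) x0"
      using not_indep_mod[OF I_fsub M(2)] by blast
    have allM: "\<forall>x\<in>M. spans_mod I (M - {x0}) x"
    proof
      fix x assume "x \<in> M"
      then show "spans_mod I (M - {x0}) x"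
        using x0 spans_self[OF _ _ I_fsub, of "M - {x0}" x] M(2) by (cases "x = x0") auto
    qed
    have "\<forall>r\<in>R. spans_mod I (M - {x0}) r"
      using spans_trans[OF I_fsub M(2) _ allM] spM M(2) by blast
    then have "R \<subseteq> lin_span A (M - {x0})"
      using M(2) MR Mh by (intro nakayama) (auto simp: spans_mod_def)
    moreover have "lin_span A (M - {x0}) \<subseteq> R" using MR by (intro lin_span_A_R) auto
    ultimately have "R = lin_span A (M - {x0})" by blast
    moreover have "M - {x0} \<subset> M" using x0 by blast
    ultimately show False using Mmin by blast
  qed
  have sumR: "(\<Sum>g\<in>\<G>. mconst (c g) * g) \<in> R" for c
    using GR by (intro subalg_sum[OF subalgR] subalg_mult[OF subalgR] subalg_mconst[OF subalgR]) auto
  have cond: "(\<forall>c :: 'k mpoly \<Rightarrow> 'k. (\<Sum>g\<in>\<G>. mconst (c g) * g) \<in> gen_ideal f n S \<longrightarrow> (\<forall>g\<in>\<G>. c g = 0))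
      \<longleftrightarrow> indep_mod I \<G>"
    unfolding indep_mod_def using part1 sumR by blast
  have "R = lin_span A \<G> \<longleftrightarrow> indep_mod I \<G>"
  proof
    assume RG: "R = lin_span A \<G>"
    have spG: "\<forall>r\<in>R. spans_mod I \<G> r"
      using span_mod_I[OF Gfin GR RG] unfolding spans_mod_def .
    show "indep_mod I \<G>"
    proof (rule ccontr)
      assume "\<not> indep_mod I \<G>"
      then obtain g0 where g0: "g0 \<in> \<G>" "spans_mod I (\<G> - {g0}) g0"
        using not_indep_mod[OF I_fsub Gfin] by blast
      have allG: "\<forall>x\<in>\<G>. spans_mod I (\<G> - {g0}) x"
      proof
        fix x assume "x \<in> \<G>"
        then show "spans_mod I (\<G> - {g0}) x"
          using g0 spans_self[OF _ _ I_fsub, of "\<G> - {g0}" x] Gfin by (cases "x = g0") auto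
      qed
      have "\<forall>x\<in>M. spans_mod I (\<G> - {g0}) x"
        using spans_trans[OF I_fsub Gfin _ allG] spG MR Gfin by blast
      then have "card M \<le> card (\<G> - {g0})"
        using steinitz_mod[OF I_fsub M(2) _ indM] Gfin by blast
      moreover have "card (\<G> - {g0}) < card \<G>"
        using g0 Gfin by (rule_tac card_Diff1_less) auto
      ultimately show False using cardeq by simp
    qed
  next
    assume indG: "indep_mod I \<G>"
    have spG: "\<forall>r\<in>R. spans_mod I \<G> r"
    proof (rule ccontr)
      assume "\<not> (\<forall>r\<in>R. spans_mod I \<G> r)"
      then obtain r where r: "r \<in> R" "\<not> spans_mod I \<G> r" by blast
      have ins: "indep_mod I (insert r \<G>)" "r \<notin> \<G>"
        using indep_insert[OF I_fsub Gfin indG r(2)] by blast+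
      have "\<forall>x\<in>insert r \<G>. spans_mod I M x" using spM r GR by blast
      then have "card (insert r \<G>) \<le> card M"
        using steinitz_mod[OF I_fsub _ M(2) ins(1)] Gfin by blast
      then show False using ins(2) Gfin cardeq by simp
    qed
    have "R \<subseteq> lin_span A \<G>"
      using Gfin GR Gh spG by (intro nakayama) (auto simp: spans_mod_def)
    moreover have "lin_span A \<G> \<subseteq> R" using GR by (rule lin_span_A_R)
    ultimately show "R = lin_span A \<G>" by blast
  qed
  then show ?thesis using cond by simp
qed

end

theorem mainTheorem3:
  fixes G :: "('g, 'b) monoid_scheme" and H :: "'g set"
    and d :: nat and rho :: "'g \<Rightarrow> nat \<Rightarrow> nat \<Rightarrow> 'k::field"
    and f :: "nat \<Rightarrow> 'k mpoly" and n :: nat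
  defines "R \<equiv> invariants d rho (carrier G)"
      and "S \<equiv> invariants d rho H"
  assumes "group G" and "finite (carrier G)" and "is_rep G d rho"
    and "hsop R f n"
    and "subgroup H G"
    and "\<not> CHAR('k) dvd card (rcosets\<^bsub>G\<^esub> H)"
  shows "{r \<in> R. r \<in> gen_ideal f n S} = lin_span (plus_ideal f n) R \<and>
     (\<forall>r\<in>R. \<forall>r'\<in>R. (r - r' \<in> gen_ideal f n S) \<longleftrightarrow> (r - r' \<in> lin_span (plus_ideal f n) R)) \<and>
     (\<forall>\<G>. free_module (alg_closure f n) R \<longrightarrow>
          \<G> \<subseteq> R \<longrightarrow> (\<forall>g\<in>\<G>. is_homog g) \<longrightarrow> finite \<G> \<longrightarrow>
          (\<exists>M. min_hom_gen_set (alg_closure f n) R M \<and> finite M \<and>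
               image_mset hdeg (mset_set \<G>) = image_mset hdeg (mset_set M)) \<longrightarrow>
          (R = lin_span (alg_closure f n) \<G> \<longleftrightarrow>
           (\<forall>c :: 'k mpoly \<Rightarrow> 'k. (\<Sum>g\<in>\<G>. mconst (c g) * g) \<in> gen_ideal f n S
                \<longrightarrow> (\<forall>g\<in>\<G>. c g = 0))))"
proof -
  interpret inv_setup G H d rho f n
    by (rule inv_setup.intro) (use assms(3-8) in \<open>simp_all add: R_def\<close>)
  have p1: "{r \<in> R. r \<in> gen_ideal f n S} = lin_span (plus_ideal f n) R"
    unfolding R_def S_def by (rule part1)
  have p2: "\<forall>r\<in>R. \<forall>r'\<in>R. (r - r' \<in> gen_ideal f n S) \<longleftrightarrow> (r - r' \<in> lin_span (plus_ideal f n) R)"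
  proof (intro ballI)
    fix r r' assume "r \<in> R" "r' \<in> R"
    then have "r - r' \<in> R" unfolding R_def by (rule subalg_diff[OF subalgR])
    then show "(r - r' \<in> gen_ideal f n S) \<longleftrightarrow> (r - r' \<in> lin_span (plus_ideal f n) R)"
      using p1 by blast
  qed
  have p3: "\<forall>\<G>. free_module (alg_closure f n) R \<longrightarrow>
          \<G> \<subseteq> R \<longrightarrow> (\<forall>g\<in>\<G>. is_homog g) \<longrightarrow> finite \<G> \<longrightarrow>
          (\<exists>M. min_hom_gen_set (alg_closure f n) R M \<and> finite M \<and>
               image_mset hdeg (mset_set \<G>) = image_mset hdeg (mset_set M)) \<longrightarrow>
          (R = lin_span (alg_closure f n) \<G> \<longleftrightarrow>
           (\<forall>c :: 'k mpoly \<Rightarrow> 'k. (\<Sum>g\<in>\<G>. mconst (c g) * g) \<in> gen_ideal f n S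
                \<longrightarrow> (\<forall>g\<in>\<G>. c g = 0)))"
    unfolding R_def S_def using part3 by blast
  show ?thesis using p1 p2 p3 by blast
qed



end
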